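(* For any $p\in\mathbb{P}^1\setminus\{\infty\}$ there is a sequence $(g_n)_{n}$ in $H(\mathbb{Z})$ such that $g_n q$ converges to $\infty$ uniformly for $q$ in compact subsets of $\mathbb{P}^1\setminus\{p\}$.
   Context: Let $\mathbb{P}^1=\mathbb{P}^1(\mathbb{R})$ with its usual topology (a circle) and the natural action of $\mathrm{PSL}_2(\mathbb{R})$. Let $G$ be the group of homeomorphisms of $\mathbb{P}^1$ which are piecewise in $\mathrm{PSL}_2(\mathbb{R})$ with finitely many pieces, each an interval. Let $\infty\in\mathbb{P}^1$ correspond to the first basis vector of $\mathbb{R}^2$ and $H<G$ its stabilizer. Let $P_{\mathbb{Z}}$ be the set of fixed points of hyperbolic elements (trace of absolute value $>2$) of $\mathrm{PSL}_2(\mathbb{Z})$, $G(\mathbb{Z})$ the subgroup of $G$ of elements piecewise in $\mathrm{PSL}_2(\mathbb{Z})$ with all interval endpoints in $P_{\mathbb{Z}}$, and $H(\mathbb{Z})=G(\mathbb{Z})\cap H$. *)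

theory Defs
  imports "HOL-Analysis.Analysis"
begin

(* Model of P^1(R): the unit circle in the complex plane.  The line spanned by a
   nonzero vector (u,v) in R^2 corresponds to the point (u+iv)^2/|u+iv|^2.
   This is a homeomorphism P^1(R) -> S^1, so the topology is the usual one. *)

definition P1 :: "complex set" where
  "P1 = sphere 0 1"

definition line_point :: "real \<Rightarrow> real \<Rightarrow> complex" where
  "line_point u v = (Complex u v)^2 / complex_of_real ((cmod (Complex u v))^2)"

definition pinf :: complex where
  "pinf = line_point 1 0"

(* natural action of the matrix (a b; c d) on lines: choose a spanning vector
   w = csqrt z of the line z, apply the matrix, take the line of the image *)
definition pact :: "real \<Rightarrow> real \<Rightarrow> real \<Rightarrow> real \<Rightarrow> complex \<Rightarrow> complex" where
  "pact a b c d z = (let w = csqrt z in line_point (a * Re w + b * Im w) (c * Re w + d * Im w))"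

definition P_Z :: "complex set" where
  "P_Z = {z \<in> P1. \<exists>a b c d :: int. a * d - b * c = 1 \<and> \<bar>a + d\<bar> > 2 \<and>
            pact (of_int a) (of_int b) (of_int c) (of_int d) z = z}"

(* The pieces are the
   (closures of the) connected components of P^1 minus the finite set B of endpoints. *)
definition G_Z :: "(complex \<Rightarrow> complex) set" where
  "G_Z = {g. (\<exists>g'. homeomorphism P1 P1 g g') \<and>
             (\<exists>B. finite B \<and> B \<subseteq> P_Z \<and>
                (\<forall>C \<in> components (P1 - B). \<exists>a b c d :: int. a * d - b * c = 1 \<and>
                    (\<forall>z \<in> C. g z = pact (of_int a) (of_int b) (of_int c) (of_int d) z)))}"

definition H_Z :: "(complex \<Rightarrow> complex) set" where
  "H_Z = {g \<in> G_Z. g pinf = pinf}"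

end

theory Submission
  imports Defs
begin


definition phi :: "real \<Rightarrow> complex" where "phi x = line_point x 1"
definition psi :: "complex \<Rightarrow> real" where "psi z = Im z / (1 - Re z)"
definition mob :: "real\<Rightarrow>real\<Rightarrow>real\<Rightarrow>real\<Rightarrow>real\<Rightarrow>real" where
  "mob a b c d x = (a*x+b)/(c*x+d)"

lemma cmod_Complex_sq: "(cmod (Complex u v))^2 = u^2 + v^2"
  by (simp add: cmod_def)

lemma lp_scale:
  assumes "l \<noteq> 0"
  shows "line_point (l* u) (l* v) = line_point u v"
proof -
  have e: "Complex (l* u) (l* v) = complex_of_real l * Complex u v"
    by (simp add: complex_eq_iff)
  show ?thesis
  proof (cases "Complex u v = 0")
    case True then show ?thesis unfolding line_point_def e by simp
  next
    case False
    hence "cmod (Complex u v) \<noteq> 0" by simp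
    thus ?thesis unfolding line_point_def e using assms
      by (simp add: norm_mult power_mult_distrib field_simps)
  qed
qed

lemma lp_P1:
  assumes "(u,v) \<noteq> (0,0)"
  shows "line_point u v \<in> P1"
proof -
  have "Complex u v \<noteq> 0" using assms by (auto simp: complex_eq_iff)
  hence "cmod (Complex u v) \<noteq> 0" by simp
  thus ?thesis unfolding P1_def line_point_def
    by (simp add: norm_divide norm_power)
qed

lemma P1_lp:
  assumes "z \<in> P1"
  shows "z = line_point (Re (csqrt z)) (Im (csqrt z))" "(Re (csqrt z), Im (csqrt z)) \<noteq> (0,0)"
proof -
  have n: "cmod z = 1" using assms by (simp add: P1_def)
  have w: "Complex (Re (csqrt z)) (Im (csqrt z)) = csqrt z" by (simp add: complex_eq_iff)
  have "(cmod (csqrt z))^2 = 1" using n by (metis norm_power power2_csqrt)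
  then show "z = line_point (Re (csqrt z)) (Im (csqrt z))"
    unfolding line_point_def w by (simp add: power2_csqrt)
  show "(Re (csqrt z), Im (csqrt z)) \<noteq> (0,0)" using n
    by (metis complex_eq_iff norm_zero power2_csqrt prod.inject zero_complex.sel zero_neq_one zero_power2)
qed

lemma pact_lp:
  assumes "(u,v) \<noteq> (0,0)"
  shows "pact a b c d (line_point u v) = line_point (a* u+b* v) (c* u+d* v)"
proof -
  define w where "w = Complex u v"
  define r where "r = cmod w"
  have w0: "w \<noteq> 0" using assms by (auto simp: w_def complex_eq_iff)
  hence r0: "r > 0" by (simp add: r_def)
  have "line_point u v = (w / of_real r)^2"
    unfolding line_point_def w_def[symmetric] r_def[symmetric] by (simp add: power_divide)
  hence "(csqrt (line_point u v))^2 = (w / of_real r)^2" by (simp add: power2_csqrt)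
  then obtain s :: real where s: "s = 1 \<or> s = -1" and cs: "csqrt (line_point u v) = of_real s * (w / of_real r)"
    unfolding power2_eq_iff by (metis mult_minus_left mult_1 of_real_1 of_real_minus)
  have re: "Re (csqrt (line_point u v)) = (s/r) * u" and im: "Im (csqrt (line_point u v)) = (s/r) * v"
    unfolding cs w_def by (simp_all add: Re_divide_of_real Im_divide_of_real)
  have "s/r \<noteq> 0" using s r0 by auto
  then show ?thesis unfolding pact_def Let_def re im
    using lp_scale[of "s/r" "a* u+b* v" "c* u+d* v"] by (simp add: algebra_simps)
qed


lemma phi_explicit: "phi x = Complex ((x^2-1)/(x^2+1)) (2*x/(x^2+1))"
proof -
  have p: "x^2+1 > 0" using zero_le_power2[of x] by linarith
  have "(Complex x 1)^2 = Complex (x^2-1) (2*x)" by (simp add: complex_eq_iff power2_eq_square)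
  moreover have "(cmod (Complex x 1))^2 = x^2+1" by (simp add: cmod_Complex_sq)
  ultimately show ?thesis unfolding phi_def line_point_def using p
    by (simp add: complex_eq_iff Re_divide_of_real Im_divide_of_real)
qed

lemma Re_phi: "Re (phi x) = (x^2-1)/(x^2+1)" and Im_phi: "Im (phi x) = 2*x/(x^2+1)"
  by (simp_all add: phi_explicit)

lemma phi_P1: "phi x \<in> P1" unfolding phi_def by (rule lp_P1) simp

lemma pinf_1: "pinf = 1"
proof -
  have "Complex 1 0 = 1" by (simp add: complex_eq_iff)
  thus ?thesis unfolding pinf_def line_point_def by simp
qed

lemma phi_ne1: "phi x \<noteq> 1"
proof
  assume "phi x = 1"
  hence "(x^2-1)/(x^2+1) = 1" using Re_phi[of x] by simp
  moreover have "x^2+1 > 0" using zero_le_power2[of x] by linarith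
  ultimately show False by (simp add: field_simps)
qed

lemma psi_phi: "psi (phi x) = x"
proof -
  have p: "x^2+1 > 0" using zero_le_power2[of x] by linarith
  have "1 - (x^2-1)/(x^2+1) = 2/(x^2+1)" using p by (simp add: field_simps)
  thus ?thesis unfolding psi_def Re_phi Im_phi using p by (simp add: field_simps)
qed

lemma phi_inj: "phi x = phi y \<longleftrightarrow> x = y"
  by (metis psi_phi)

lemma P1_Re_lt: assumes "z \<in> P1" "z \<noteq> 1" shows "Re z < 1"
proof -
  have "cmod z = 1" using assms by (simp add: P1_def)
  hence a: "(Re z)^2 + (Im z)^2 = 1" by (simp add: cmod_def)
  have "Re z \<le> 1" using abs_Re_le_cmod[of z] \<open>cmod z = 1\<close> by simp
  moreover have "Re z \<noteq> 1"
  proof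
    assume "Re z = 1" with a have "Im z = 0" by simp
    with \<open>Re z = 1\<close> have "z = 1" by (simp add: complex_eq_iff)
    with assms show False by simp
  qed
  ultimately show ?thesis by simp
qed

lemma phi_psi: assumes "z \<in> P1" "z \<noteq> 1" shows "phi (psi z) = z"
proof -
  have "cmod z = 1" using assms by (simp add: P1_def)
  hence a: "(Re z)^2 + (Im z)^2 = 1" by (simp add: cmod_def)
  have r: "1 - Re z > 0" using P1_Re_lt[OF assms] by simp
  define x where "x = psi z"
  have xd: "x * (1 - Re z) = Im z" using r by (simp add: x_def psi_def)
  have b: "(Im z)^2 = (1 - Re z) * (1 + Re z)" using a by (simp add: algebra_simps power2_eq_square)
  have s: "x^2 + 1 = 2/(1 - Re z)"
  proof -
    have "(x^2+1) * (1 - Re z)^2 = (x * (1 - Re z))^2 + (1 - Re z)^2" by (simp add: algebra_simps power2_eq_square)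
    also have "\<dots> = (Im z)^2 + (1 - Re z)^2" using xd by simp
    also have "\<dots> = 2 * (1 - Re z)" using b by (simp add: algebra_simps power2_eq_square)
    finally have h: "(x^2+1) * (1 - Re z)^2 = 2 * (1 - Re z)" .
    hence "((x^2+1)*(1-Re z) - 2) * (1 - Re z) = 0" by (simp add: algebra_simps power2_eq_square)
    hence "(x^2+1)*(1-Re z) = 2" using r by simp
    thus ?thesis using r by (simp add: field_simps)
  qed
  have "x^2 - 1 = 2/(1 - Re z) - 2" using s by simp
  have p: "x^2+1 > 0" using zero_le_power2[of x] by linarith
  have re: "(x^2-1)/(x^2+1) = Re z" using s r p by (simp add: field_simps)
  have s2: "(x^2+1)*(1-Re z) = 2" using s r by (simp add: field_simps)
  have "2*x = (x*(1-Re z))*(x^2+1)" using s2 by (metis mult.commute mult.left_commute)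
  hence im: "2*x/(x^2+1) = Im z" using xd p by (simp add: field_simps)
  show ?thesis unfolding x_def[symmetric] phi_explicit using re im by (simp add: complex_eq_iff)
qed

lemma P1_1: "(1::complex) \<in> P1" by (simp add: P1_def)

lemma P1_cases: "z \<in> P1 \<longleftrightarrow> z = 1 \<or> (\<exists>x. z = phi x)"
  using phi_psi[of z] phi_P1 P1_1 by metis

lemma pact_phi:
  assumes "c*x+d \<noteq> 0"
  shows "pact a b c d (phi x) = phi (mob a b c d x)"
proof -
  have "pact a b c d (phi x) = line_point (a*x+b) (c*x+d)"
    unfolding phi_def by (subst pact_lp) (auto simp: algebra_simps)
  also have "\<dots> = line_point ((c*x+d) * mob a b c d x) ((c*x+d) * 1)"
    using assms by (simp add: mob_def)
  also have "\<dots> = phi (mob a b c d x)" unfolding phi_def by (rule lp_scale[OF assms])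
  finally show ?thesis .
qed

lemma pact_P1: assumes "z \<in> P1" "a*d-b*c \<noteq> 0" shows "pact a b c d z \<in> P1"
proof -
  let ?u = "Re (csqrt z)" and ?v = "Im (csqrt z)"
  have "(a* ?u + b* ?v, c* ?u + d* ?v) \<noteq> (0,0)"
  proof
    assume h: "(a* ?u + b* ?v, c* ?u + d* ?v) = (0,0)"
    hence "d*(a* ?u + b* ?v) - b*(c* ?u + d* ?v) = 0" "a*(c* ?u + d* ?v) - c*(a* ?u + b* ?v) = 0" by auto
    hence "(a*d-b*c) * ?u = 0" "(a*d-b*c) * ?v = 0" by (simp_all add: algebra_simps)
    with assms(2) have "(?u, ?v) = (0,0)" by simp
    with P1_lp(2)[OF assms(1)] show False by simp
  qed
  then show ?thesis using P1_lp[OF assms(1)] pact_lp lp_P1 by metis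
qed

lemma P1_lp_ex: assumes "z \<in> P1" obtains u v where "z = line_point u v" "(u,v) \<noteq> (0,0)"
  using P1_lp[OF assms] by blast

lemma pact_comp:
  assumes "z \<in> P1" "a*d-b*c \<noteq> 0"
  shows "pact a' b' c' d' (pact a b c d z) = pact (a'*a+b'*c) (a'*b+b'*d) (c'*a+d'*c) (c'*b+d'*d) z"
proof -
  obtain u v where z: "z = line_point u v" and uv: "(u,v) \<noteq> (0,0)" using P1_lp_ex[OF assms(1)] by blast
  have nz: "(a* u + b* v, c* u + d* v) \<noteq> (0,0)"
  proof
    assume h: "(a* u + b* v, c* u + d* v) = (0,0)"
    hence "d*(a* u + b* v) - b*(c* u + d* v) = 0" "a*(c* u + d* v) - c*(a* u + b* v) = 0" by auto
    hence "(a*d-b*c) * u = 0" "(a*d-b*c) * v = 0" by (simp_all add: algebra_simps)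
    with assms(2) have "(u, v) = (0,0)" by simp
    with uv show False by simp
  qed
  have "pact a' b' c' d' (pact a b c d z) = line_point (a'*(a* u + b* v) + b'*(c* u + d* v)) (c'*(a* u + b* v) + d'*(c* u + d* v))"
    unfolding z pact_lp[OF uv] pact_lp[OF nz] ..
  also have "\<dots> = pact (a'*a+b'*c) (a'*b+b'*d) (c'*a+d'*c) (c'*b+d'*d) z"
    unfolding z pact_lp[OF uv] by (simp add: algebra_simps)
  finally show ?thesis .
qed

lemma pact_id: assumes "z \<in> P1" shows "pact 1 0 0 1 z = z"
proof -
  obtain u v where z: "z = line_point u v" and uv: "(u,v) \<noteq> (0,0)" using P1_lp_ex[OF assms(1)] by blast
  show ?thesis unfolding z pact_lp[OF uv] by simp
qed



lemma phi_eq2: "phi x = complex_of_real ((x^2-1)/(x^2+1)) + \<i> * complex_of_real (2*x/(x^2+1))"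
  by (simp add: complex_eq_iff phi_explicit)

lemma cont_phi: "continuous_on S phi"
proof -
  have "\<forall>x. x^2+1 \<noteq> (0::real)" using zero_le_power2 by (metis add_nonneg_pos not_one_le_zero zero_less_one order_less_irrefl)
  hence "continuous_on S (\<lambda>x. complex_of_real ((x^2-1)/(x^2+1)) + \<i> * complex_of_real (2*x/(x^2+1)))"
    by (intro continuous_intros) auto
  thus ?thesis by (simp add: phi_eq2[abs_def])
qed

lemma cont_psi: "continuous_on (P1 - {1}) psi"
proof -
  have "\<forall>z\<in>P1-{1}. 1 - Re z \<noteq> 0" using P1_Re_lt by fastforce
  thus ?thesis unfolding psi_def[abs_def] by (intro continuous_intros) auto
qed

lemma phi_image_eq: "phi ` S = {z \<in> P1 - {1}. psi z \<in> S}"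
  using phi_psi psi_phi phi_P1 phi_ne1 by (auto, metis image_eqI)

lemma openin_P1_del: "openin (top_of_set P1) (P1 - {1})"
  by (rule openin_delete) (rule openin_subtopology_self)

lemma openin_phi_image: assumes "open S" shows "openin (top_of_set P1) (phi ` S)"
proof -
  have "openin (top_of_set (P1 - {1})) ((P1 - {1}) \<inter> psi -` S)"
    by (rule continuous_openin_preimage_gen[OF cont_psi assms])
  moreover have "(P1 - {1}) \<inter> psi -` S = phi ` S" unfolding phi_image_eq by auto
  ultimately show ?thesis using openin_trans openin_P1_del by metis
qed

lemma closed_phi_Icc: "closed (phi ` {a..b})"
  by (intro compact_imp_closed compact_continuous_image cont_phi compact_Icc)

lemma closed_P1: "closed P1" unfolding P1_def by simp

definition gb :: "int \<Rightarrow> int \<Rightarrow> int \<Rightarrow> int \<Rightarrow> real \<Rightarrow> real \<Rightarrow> bool" where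
  "gb a b c d u1 u2 \<longleftrightarrow> a*d - b*c = 1 \<and> \<bar>a+d\<bar> > 2 \<and> u1 < u2 \<and>
     mob (of_int a) (of_int b) (of_int c) (of_int d) u1 = u1 \<and>
     mob (of_int a) (of_int b) (of_int c) (of_int d) u2 = u2 \<and>
     (\<forall>x\<in>{u1..u2}. of_int c*x + of_int d \<noteq> 0 \<and> - (of_int c)*x + of_int a \<noteq> 0)"

lemma gb_inv: assumes "gb a b c d u1 u2" shows "gb d (-b) (-c) a u1 u2"
proof -
  have det: "real_of_int a * d - b * c = 1" using assms unfolding gb_def
    by (metis of_int_1 of_int_diff of_int_mult)
  have "mob d (-b) (-c) a u = u" if "mob a b c d u = u" "c*u+d \<noteq> 0" "-c*u+a\<noteq>0" for u a b c d :: real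
  proof -
    from that have "a*u+b = u*(c*u+d)" by (simp add: mob_def field_simps)
    hence "d*u-b = u*(-c*u+a)" by (simp add: algebra_simps)
    thus ?thesis using that by (simp add: mob_def field_simps)
  qed
  then show ?thesis using assms unfolding gb_def by (auto simp: algebra_simps)
qed



lemma lin_sign:
  fixes c d x y u1 u2 :: real
  assumes nz: "\<forall>z\<in>{u1..u2}. c*z + d \<noteq> 0" and x: "x \<in> {u1..u2}" and y: "y \<in> {u1..u2}"
  shows "(c*x+d)*(c*y+d) > 0"
proof (rule ccontr)
  assume "\<not> ?thesis"
  moreover have "c*x+d \<noteq> 0" "c*y+d \<noteq> 0" using nz x y by auto
  ultimately have neg: "(c*x+d)*(c*y+d) < 0" by (simp add: not_less) (metis mult_eq_0_iff order_le_less)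
  show False
  proof (cases "c = 0")
    case True then show ?thesis using neg by (simp add: mult_less_0_iff)
  next
    case False
    define z0 where "z0 = -d/c"
    have fx: "c*x+d = c*(x - z0)" "c*y+d = c*(y-z0)" "c*z0+d = 0" using False by (simp_all add: z0_def field_simps)
    have "c*c*((x-z0)*(y-z0)) < 0" using neg unfolding fx by (simp add: algebra_simps)
    moreover have "c*c > 0" using False by (simp add: zero_less_mult_iff) linarith
    ultimately have "(x-z0)*(y-z0) < 0" by (simp add: mult_less_0_iff)
    hence "z0 \<in> {u1..u2}" using x y by (auto simp: mult_less_0_iff)
    thus False using nz fx(3) by auto
  qed
qed

lemma mob_diff:
  fixes a b c d x y :: real
  assumes "c*x+d \<noteq> 0" "c*y+d \<noteq> 0" "a*d-b*c = 1"
  shows "mob a b c d x - mob a b c d y = (x - y) / ((c*x+d)*(c*y+d))"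
proof -
  have "mob a b c d x - mob a b c d y = ((a*x+b)*(c*y+d) - (a*y+b)*(c*x+d)) / ((c*x+d)*(c*y+d))"
    using assms by (simp add: mob_def field_simps)
  also have "(a*x+b)*(c*y+d) - (a*y+b)*(c*x+d) = (x - y)*(a*d-b*c)" by (simp add: algebra_simps)
  finally show ?thesis using assms(3) by simp
qed

lemma mob_mono:
  fixes a b c d :: real
  assumes "\<forall>z\<in>{u1..u2}. c*z + d \<noteq> 0" "a*d-b*c = 1" "x \<in> {u1..u2}" "y \<in> {u1..u2}" "x < y"
  shows "mob a b c d x < mob a b c d y"
proof -
  have p: "(c*x+d)*(c*y+d) > 0" by (rule lin_sign[OF assms(1,3,4)])
  hence "c*x+d \<noteq> 0" "c*y+d \<noteq> 0" by auto
  hence "mob a b c d x - mob a b c d y = (x - y) / ((c*x+d)*(c*y+d))" using mob_diff assms(2) by blast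
  moreover have "(x - y) / ((c*x+d)*(c*y+d)) < 0" using p assms(5) by (simp add: divide_neg_pos)
  ultimately show ?thesis by simp
qed

lemma mob_inv:
  fixes a b c d x :: real
  assumes "c*x+d \<noteq> 0" "a*d-b*c = 1"
  shows "mob d (-b) (-c) a (mob a b c d x) = x"
proof -
  have "-c * mob a b c d x + a = 1/(c*x+d)"
  proof -
    have "-c * mob a b c d x + a = (a*d - b*c)/(c*x+d)" using assms(1) by (simp add: mob_def field_simps)
    thus ?thesis using assms(2) by simp
  qed
  moreover have "d * mob a b c d x - b = x/(c*x+d)"
  proof -
    have "d * mob a b c d x - b = x*(a*d - b*c)/(c*x+d)" using assms(1) by (simp add: mob_def field_simps)
    thus ?thesis using assms(2) by simp
  qed
  ultimately show ?thesis using assms(1) by (simp add: mob_def)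
qed

lemma gb_det: "gb a b c d u1 u2 \<Longrightarrow> real_of_int a * of_int d - of_int b * of_int c = 1"
  unfolding gb_def by (metis of_int_1 of_int_diff of_int_mult)

abbreviation "ipact a b c d \<equiv> pact (of_int a) (of_int b) (of_int c) (of_int d)"
abbreviation "imob a b c d \<equiv> mob (of_int a) (of_int b) (of_int c) (of_int d)"

lemma gb_maps:
  assumes "gb a b c d u1 u2" "x \<in> {u1<..<u2}"
  shows "imob a b c d x \<in> {u1<..<u2}"
proof -
  have nz: "\<forall>z\<in>{u1..u2}. of_int c*z + of_int d \<noteq> 0" using assms(1) unfolding gb_def by auto
  have f: "imob a b c d u1 = u1" "imob a b c d u2 = u2" using assms(1) unfolding gb_def by auto
  have "imob a b c d u1 < imob a b c d x" "imob a b c d x < imob a b c d u2"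
    using mob_mono[OF nz gb_det[OF assms(1)]] assms(2) by auto
  thus ?thesis using f by simp
qed

lemma gb_pact_phi:
  assumes "gb a b c d u1 u2" "x \<in> {u1..u2}"
  shows "ipact a b c d (phi x) = phi (imob a b c d x)"
  using assms pact_phi unfolding gb_def by auto

lemma gb_arc_maps:
  assumes "gb a b c d u1 u2" "z \<in> phi ` {u1<..<u2}"
  shows "ipact a b c d z \<in> phi ` {u1<..<u2}"
  using assms gb_maps gb_pact_phi by fastforce

lemma gb_arc_inv:
  assumes "gb a b c d u1 u2" "z \<in> P1"
  shows "ipact d (-b) (-c) a (ipact a b c d z) = z"
proof -
  have det: "real_of_int a * of_int d - of_int b * of_int c = 1" by (rule gb_det[OF assms(1)])
  have "ipact d (-b) (-c) a (ipact a b c d z) = pact 1 0 0 1 z"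
    apply (subst pact_comp[OF assms(2)])
    using det by (simp_all add: algebra_simps)
  thus ?thesis using pact_id[OF assms(2)] by simp
qed

lemma gb_cont:
  assumes "gb a b c d u1 u2"
  shows "continuous_on (phi ` {u1..u2}) (ipact a b c d)"
proof -
  have nz: "\<forall>z\<in>{u1..u2}. of_int c*z + of_int d \<noteq> 0" using assms(1) unfolding gb_def by auto
  have sub: "phi ` {u1..u2} \<subseteq> P1 - {1}" using phi_P1 phi_ne1 by auto
  have c1: "continuous_on (phi ` {u1..u2}) psi" using cont_psi sub continuous_on_subset by blast
  have c2: "continuous_on {u1..u2} (imob a b c d)" unfolding mob_def[abs_def]
    using nz by (intro continuous_intros) auto
  have im: "psi ` phi ` {u1..u2} = {u1..u2}" by (force simp: psi_phi image_image)
  have "continuous_on (phi ` {u1..u2}) (phi \<circ> (imob a b c d \<circ> psi))"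
    apply (rule continuous_on_compose)
     apply (rule continuous_on_compose[OF c1])
    using c2 im apply simp
    using cont_phi by blast
  moreover have "\<forall>z\<in>phi ` {u1..u2}. (phi \<circ> (imob a b c d \<circ> psi)) z = ipact a b c d z"
    using gb_pact_phi[OF assms] psi_phi by auto
  ultimately show ?thesis using continuous_on_eq by blast
qed



definition glue :: "(complex \<Rightarrow> complex) \<Rightarrow> (complex \<Rightarrow> complex) \<Rightarrow> real \<Rightarrow> real \<Rightarrow> real \<Rightarrow> real \<Rightarrow> complex \<Rightarrow> complex" where
  "glue fR fL l1 l2 r1 r2 z = (if z \<in> phi ` {r1<..<r2} then fR z else if z \<in> phi ` {l1<..<l2} then fL z else z)"

lemma phi_mem_iff: "phi x \<in> phi ` S \<longleftrightarrow> x \<in> S"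
proof
  assume "phi x \<in> phi ` S" then obtain y where "y \<in> S" "phi x = phi y" by auto
  thus "x \<in> S" using phi_inj by simp
qed auto

lemma glue_cont:
  assumes ord: "l1 < l2" "l2 < r1" "r1 < r2"
    and cR: "continuous_on (phi ` {r1..r2}) fR" and eR: "fR (phi r1) = phi r1" "fR (phi r2) = phi r2"
    and cL: "continuous_on (phi ` {l1..l2}) fL" and eL: "fL (phi l1) = phi l1" "fL (phi l2) = phi l2"
  shows "continuous_on P1 (glue fR fL l1 l2 r1 r2)"
proof -
  let ?g = "glue fR fL l1 l2 r1 r2"
  define SR where "SR = phi ` {r1..r2}"
  define SL where "SL = phi ` {l1..l2}"
  define SM where "SM = phi ` {l2..r1}"
  define SO where "SO = P1 - phi ` {l1<..<r2}"
  have clSO: "closed SO"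
  proof -
    have "closedin (top_of_set P1) (P1 - phi ` {l1<..<r2})"
      by (intro closedin_diff closedin_topspace[of "top_of_set P1", simplified] openin_phi_image) auto
    thus ?thesis unfolding SO_def using closedin_closed_trans closed_P1 by blast
  qed
  have cov: "P1 = SR \<union> SL \<union> SM \<union> SO"
  proof
    show "P1 \<subseteq> SR \<union> SL \<union> SM \<union> SO"
    proof
      fix z assume z: "z \<in> P1"
      show "z \<in> SR \<union> SL \<union> SM \<union> SO"
      proof (cases "z \<in> phi ` {l1<..<r2}")
        case True
        then obtain x where x: "z = phi x" "l1 < x" "x < r2" by auto
        show ?thesis
        proof (cases "x \<le> l2")
          case True then show ?thesis using x unfolding SL_def by auto
        next
          case False
          show ?thesis
          proof (cases "x \<le> r1")
            case True then show ?thesis using x False unfolding SM_def by auto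
          next
            case False then show ?thesis using x unfolding SR_def by auto
          qed
        qed
      next
        case False then show ?thesis using z unfolding SO_def by auto
      qed
    qed
    show "SR \<union> SL \<union> SM \<union> SO \<subseteq> P1" unfolding SR_def SL_def SM_def SO_def using phi_P1 by auto
  qed
  have c1: "continuous_on SR ?g"
  proof (rule continuous_on_eq[OF cR[folded SR_def]])
    fix z assume "z \<in> SR"
    then obtain x where x: "z = phi x" "r1 \<le> x" "x \<le> r2" unfolding SR_def by auto
    show "fR z = ?g z"
    proof (cases "x = r1 \<or> x = r2")
      case True then show ?thesis using x eR ord unfolding glue_def by (auto simp: phi_mem_iff)
    next
      case False then show ?thesis using x unfolding glue_def by (auto simp: phi_mem_iff)
    qed
  qed
  have c2: "continuous_on SL ?g"
  proof (rule continuous_on_eq[OF cL[folded SL_def]])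
    fix z assume "z \<in> SL"
    then obtain x where x: "z = phi x" "l1 \<le> x" "x \<le> l2" unfolding SL_def by auto
    show "fL z = ?g z"
    proof (cases "x = l1 \<or> x = l2")
      case True then show ?thesis using x eL ord unfolding glue_def by (auto simp: phi_mem_iff)
    next
      case False then show ?thesis using x ord unfolding glue_def by (auto simp: phi_mem_iff)
    qed
  qed
  have c3: "continuous_on SM ?g"
  proof (rule continuous_on_eq[OF continuous_on_id])
    fix z assume "z \<in> SM"
    then obtain x where x: "z = phi x" "l2 \<le> x" "x \<le> r1" unfolding SM_def by auto
    show "z = ?g z" using x unfolding glue_def by (auto simp: phi_mem_iff)
  qed
  have c4: "continuous_on SO ?g"
  proof (rule continuous_on_eq[OF continuous_on_id])
    fix z assume z: "z \<in> SO"
    have "phi ` {r1<..<r2} \<subseteq> phi ` {l1<..<r2}" "phi ` {l1<..<l2} \<subseteq> phi ` {l1<..<r2}"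
      using ord by (auto intro!: image_mono)
    then show "z = ?g z" using z unfolding glue_def SO_def by auto
  qed
  have "continuous_on (SR \<union> SL \<union> SM \<union> SO) ?g"
    by (intro continuous_on_closed_Un c1 c2 c3 c4 clSO closed_Un closed_phi_Icc[of r1 r2, folded SR_def]
        closed_phi_Icc[of l1 l2, folded SL_def] closed_phi_Icc[of l2 r1, folded SM_def])
  thus ?thesis using cov by simp
qed

lemma glue_P1:
  assumes "\<And>z. z \<in> phi ` {r1<..<r2} \<Longrightarrow> fR z \<in> P1" "\<And>z. z \<in> phi ` {l1<..<l2} \<Longrightarrow> fL z \<in> P1" "z \<in> P1"
  shows "glue fR fL l1 l2 r1 r2 z \<in> P1"
  using assms unfolding glue_def by auto

lemma glue_inv:
  assumes ord: "l2 < r1"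
    and mR: "\<And>z. z \<in> phi ` {r1<..<r2} \<Longrightarrow> fR z \<in> phi ` {r1<..<r2}"
    and mL: "\<And>z. z \<in> phi ` {l1<..<l2} \<Longrightarrow> fL z \<in> phi ` {l1<..<l2}"
    and iR: "\<And>z. z \<in> phi ` {r1<..<r2} \<Longrightarrow> gR (fR z) = z"
    and iL: "\<And>z. z \<in> phi ` {l1<..<l2} \<Longrightarrow> gL (fL z) = z"
  shows "glue gR gL l1 l2 r1 r2 (glue fR fL l1 l2 r1 r2 z) = z"
proof -
  have disj: "phi ` {r1<..<r2} \<inter> phi ` {l1<..<l2} = {}" using ord phi_inj by fastforce
  show ?thesis
  proof (cases "z \<in> phi ` {r1<..<r2}")
    case True then show ?thesis using mR iR unfolding glue_def by auto
  next
    case F1: False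
    show ?thesis
    proof (cases "z \<in> phi ` {l1<..<l2}")
      case True
      have "fL z \<notin> phi ` {r1<..<r2}" using mL[OF True] disj by blast
      then show ?thesis using True F1 mL iL unfolding glue_def by auto
    next
      case False then show ?thesis using F1 unfolding glue_def by auto
    qed
  qed
qed



lemma gb_fix1: "gb a b c d u1 u2 \<Longrightarrow> ipact a b c d (phi u1) = phi u1"
  using gb_pact_phi[of a b c d u1 u2 u1] unfolding gb_def by auto
lemma gb_fix2: "gb a b c d u1 u2 \<Longrightarrow> ipact a b c d (phi u2) = phi u2"
  using gb_pact_phi[of a b c d u1 u2 u2] unfolding gb_def by auto

lemma gb_PZ1: "gb a b c d u1 u2 \<Longrightarrow> phi u1 \<in> P_Z"
  unfolding P_Z_def using gb_fix1 phi_P1 unfolding gb_def by blast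
lemma gb_PZ2: "gb a b c d u1 u2 \<Longrightarrow> phi u2 \<in> P_Z"
  unfolding P_Z_def using gb_fix2 phi_P1 unfolding gb_def by blast

lemma gb_u12: "gb a b c d u1 u2 \<Longrightarrow> u1 < u2" unfolding gb_def by simp

lemma glue_homeo:
  assumes R: "gb aR bR cR dR r1 r2" and L: "gb aL bL cL dL l1 l2" and ord: "l2 < r1"
  shows "homeomorphism P1 P1 (glue (ipact aR bR cR dR) (ipact aL bL cL dL) l1 l2 r1 r2)
                             (glue (ipact dR (-bR) (-cR) aR) (ipact dL (-bL) (-cL) aL) l1 l2 r1 r2)"
proof -
  have R': "gb dR (-bR) (-cR) aR r1 r2" by (rule gb_inv[OF R])
  have L': "gb dL (-bL) (-cL) aL l1 l2" by (rule gb_inv[OF L])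
  have o: "l1 < l2" "r1 < r2" using gb_u12 R L by auto
  have arcP1: "phi ` S \<subseteq> P1" for S using phi_P1 by auto
  have invR': "ipact aR bR cR dR (ipact dR (-bR) (-cR) aR z) = z" if "z \<in> P1" for z
    using gb_arc_inv[OF R' that] by simp
  have invL': "ipact aL bL cL dL (ipact dL (-bL) (-cL) aL z) = z" if "z \<in> P1" for z
    using gb_arc_inv[OF L' that] by simp
  show ?thesis
  proof (rule homeomorphismI)
    show "continuous_on P1 (glue (ipact aR bR cR dR) (ipact aL bL cL dL) l1 l2 r1 r2)"
      by (rule glue_cont[OF o(1) ord o(2) gb_cont[OF R] gb_fix1[OF R] gb_fix2[OF R] gb_cont[OF L] gb_fix1[OF L] gb_fix2[OF L]])
    show "continuous_on P1 (glue (ipact dR (-bR) (-cR) aR) (ipact dL (-bL) (-cL) aL) l1 l2 r1 r2)"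
      by (rule glue_cont[OF o(1) ord o(2) gb_cont[OF R'] gb_fix1[OF R'] gb_fix2[OF R'] gb_cont[OF L'] gb_fix1[OF L'] gb_fix2[OF L']])
    show "glue (ipact aR bR cR dR) (ipact aL bL cL dL) l1 l2 r1 r2 ` P1 \<subseteq> P1"
      using glue_P1[of r1 r2 "ipact aR bR cR dR" l1 l2 "ipact aL bL cL dL"] gb_arc_maps[OF R] gb_arc_maps[OF L] arcP1 by blast
    show "glue (ipact dR (-bR) (-cR) aR) (ipact dL (-bL) (-cL) aL) l1 l2 r1 r2 ` P1 \<subseteq> P1"
      using glue_P1[of r1 r2 "ipact dR (-bR) (-cR) aR" l1 l2 "ipact dL (-bL) (-cL) aL"] gb_arc_maps[OF R'] gb_arc_maps[OF L'] arcP1 by blast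
    show "glue (ipact dR (-bR) (-cR) aR) (ipact dL (-bL) (-cL) aL) l1 l2 r1 r2 (glue (ipact aR bR cR dR) (ipact aL bL cL dL) l1 l2 r1 r2 z) = z" for z
      by (rule glue_inv[OF ord]) (use gb_arc_maps[OF R] gb_arc_maps[OF L] gb_arc_inv[OF R] gb_arc_inv[OF L] arcP1 in blast)+
    show "glue (ipact aR bR cR dR) (ipact aL bL cL dL) l1 l2 r1 r2 (glue (ipact dR (-bR) (-cR) aR) (ipact dL (-bL) (-cL) aL) l1 l2 r1 r2 z) = z" for z
      by (rule glue_inv[OF ord]) (use gb_arc_maps[OF R'] gb_arc_maps[OF L'] invR' invL' arcP1 in blast)+
  qed
qed


lemma conn3:
  assumes "connected C" "C \<subseteq> P1" "C \<subseteq> A1 \<union> A2 \<union> A3"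
    "openin (top_of_set P1) A1" "openin (top_of_set P1) A2" "openin (top_of_set P1) A3"
    "A1 \<inter> A2 = {}" "A1 \<inter> A3 = {}" "A2 \<inter> A3 = {}"
  shows "C \<subseteq> A1 \<or> C \<subseteq> A2 \<or> C \<subseteq> A3"
proof -
  obtain T1 where T1: "open T1" "A1 = P1 \<inter> T1" using assms(4) openin_open by blast
  obtain T2 where T2: "open T2" "A2 = P1 \<inter> T2" using assms(5) openin_open by blast
  obtain T3 where T3: "open T3" "A3 = P1 \<inter> T3" using assms(6) openin_open by blast
  have "T1 \<inter> (T2 \<union> T3) \<inter> C = {}" using assms(2,7,8) T1 T2 T3 by blast
  moreover have "C \<subseteq> T1 \<union> (T2 \<union> T3)" using assms(3) T1 T2 T3 by blast
  ultimately have "T1 \<inter> C = {} \<or> (T2 \<union> T3) \<inter> C = {}"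
    using connectedD[OF assms(1) T1(1) open_Un[OF T2(1) T3(1)]] by blast
  then show ?thesis
  proof
    assume e: "T1 \<inter> C = {}"
    have "T2 \<inter> T3 \<inter> C = {}" using assms(2,9) T2 T3 by blast
    moreover have "C \<subseteq> T2 \<union> T3" using assms(3) e T1 T2 T3 by blast
    ultimately have "T2 \<inter> C = {} \<or> T3 \<inter> C = {}" using connectedD[OF assms(1) T2(1) T3(1)] by blast
    thus ?thesis using assms(2,3) e T1 T2 T3 by blast
  next
    assume "(T2 \<union> T3) \<inter> C = {}" thus ?thesis using assms(2,3) T1 T2 T3 by blast
  qed
qed

lemma glue_HZ:
  assumes R: "gb aR bR cR dR r1 r2" and L: "gb aL bL cL dL l1 l2" and ord: "l2 < r1"
  shows "glue (ipact aR bR cR dR) (ipact aL bL cL dL) l1 l2 r1 r2 \<in> H_Z"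
proof -
  let ?g = "glue (ipact aR bR cR dR) (ipact aL bL cL dL) l1 l2 r1 r2"
  have o: "l1 < l2" "r1 < r2" using gb_u12 R L by auto
  define B where "B = {phi l1, phi l2, phi r1, phi r2}"
  have BPZ: "B \<subseteq> P_Z" unfolding B_def using gb_PZ1 gb_PZ2 R L by blast
  have fin: "finite B" unfolding B_def by simp
  define OR where "OR = phi ` {r1<..<r2}"
  define OL where "OL = phi ` {l1<..<l2}"
  define O3 where "O3 = P1 - (phi ` {r1..r2} \<union> phi ` {l1..l2})"
  have opR: "openin (top_of_set P1) OR" unfolding OR_def by (rule openin_phi_image) simp
  have opL: "openin (top_of_set P1) OL" unfolding OL_def by (rule openin_phi_image) simp
  have op3: "openin (top_of_set P1) O3" unfolding O3_def
  proof (rule openin_diff[OF openin_subtopology_self])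
    show "closedin (top_of_set P1) (phi ` {r1..r2} \<union> phi ` {l1..l2})"
      by (rule closed_subset) (use phi_P1 closed_phi_Icc in auto)
  qed
  have d12: "OR \<inter> OL = {}" unfolding OR_def OL_def using ord phi_inj by fastforce
  have d13: "OR \<inter> O3 = {}" unfolding OR_def O3_def by auto
  have d23: "OL \<inter> O3 = {}" unfolding OL_def O3_def by auto
  have cov: "P1 - B \<subseteq> OR \<union> OL \<union> O3"
  proof
    fix z assume z: "z \<in> P1 - B"
    show "z \<in> OR \<union> OL \<union> O3"
    proof (cases "z \<in> phi ` {r1..r2} \<union> phi ` {l1..l2}")
      case True
      then obtain x where x: "z = phi x" "x \<in> {r1..r2} \<union> {l1..l2}" by auto
      have "x \<noteq> r1" "x \<noteq> r2" "x \<noteq> l1" "x \<noteq> l2" using z x unfolding B_def by auto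
      then show ?thesis using x unfolding OR_def OL_def by auto
    next
      case False then show ?thesis using z unfolding O3_def by auto
    qed
  qed
  have comp: "\<exists>a b c d :: int. a * d - b * c = 1 \<and> (\<forall>z \<in> C. ?g z = ipact a b c d z)"
    if C: "C \<in> components (P1 - B)" for C
  proof -
    have Csub: "C \<subseteq> P1 - B" by (rule in_components_subset[OF C])
    have "C \<subseteq> OR \<or> C \<subseteq> OL \<or> C \<subseteq> O3"
      by (rule conn3[OF in_components_connected[OF C] _ _ opR opL op3 d12 d13 d23]) (use Csub cov in auto)
    then show ?thesis
    proof (elim disjE)
      assume "C \<subseteq> OR"
      hence "\<forall>z\<in>C. ?g z = ipact aR bR cR dR z" unfolding glue_def OR_def by auto
      thus ?thesis using R unfolding gb_def by blast
    next
      assume "C \<subseteq> OL"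
      hence "\<forall>z\<in>C. ?g z = ipact aL bL cL dL z" using d12 unfolding glue_def OR_def OL_def by auto
      thus ?thesis using L unfolding gb_def by blast
    next
      assume a: "C \<subseteq> O3"
      have "\<forall>z\<in>C. ?g z = ipact 1 0 0 1 z"
      proof
        fix z assume "z \<in> C"
        hence "z \<in> O3" using a by auto
        moreover have "OR \<subseteq> phi ` {r1..r2}" "OL \<subseteq> phi ` {l1..l2}" unfolding OR_def OL_def by auto
        ultimately have "?g z = z" "z \<in> P1" unfolding glue_def O3_def OR_def OL_def by auto
        thus "?g z = ipact 1 0 0 1 z" using pact_id by simp
      qed
      thus ?thesis by (intro exI[of _ 1] exI[of _ 0]) simp
    qed
  qed
  have n1: "1 \<notin> phi ` S" for S using phi_ne1 by auto
  have fixinf: "?g pinf = pinf" unfolding pinf_1 glue_def using n1 by simp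
  have "?g \<in> G_Z" unfolding G_Z_def mem_Collect_eq
    apply (rule conjI)
    using glue_homeo[OF R L ord] apply blast
    apply (rule exI[of _ B])
    using fin BPZ comp by blast
  then show ?thesis unfolding H_Z_def using fixinf by blast
qed



lemma mobN:
  fixes K T M x :: real
  assumes "M > 0" "1 - M^2*(x-K) \<noteq> 0"
  shows "mob (1 - K*M^2 - T*M^2) (K^2*M^2 + T*(K*M^2+1)) (-(M^2)) (K*M^2+1) x = K + T + (x-K)/(1 - M^2*(x-K))"
  using assms unfolding mob_def
  by (simp add: field_simps) (simp add: algebra_simps power2_eq_square)

lemma bump_real:
  fixes K T M p0 n :: real
  assumes Mn: "M = 4*n" and n1: "n \<ge> 1" and Kp: "p0 < K" "K \<le> p0 + 1/M" and Tn: "T \<ge> n + 2 + \<bar>p0\<bar>"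
  defines "s \<equiv> sqrt (T^2 - 4*T/M^2)"
  defines "y1 \<equiv> (T - s)/2" and "y2 \<equiv> (T + s)/2"
  defines "A \<equiv> 1 - K*M^2 - T*M^2" and "B \<equiv> K^2*M^2 + T*(K*M^2+1)" and "C \<equiv> -(M^2)" and "D \<equiv> K*M^2+1"
  shows "K + y1 < K + y2" "mob A B C D (K+y1) = K+y1" "mob A B C D (K+y2) = K+y2"
    "\<forall>x\<in>{K+y1..K+y2}. C*x + D \<noteq> 0 \<and> - C*x + A \<noteq> 0"
    "p0 < K + y1" "K + y1 < p0 + 1/n" "n \<le> K + y2"
    "\<forall>x. p0 + 1/n \<le> x \<longrightarrow> x < K + y2 \<longrightarrow> n \<le> mob A B C D x"
proof -
  have M4: "M \<ge> 4" using Mn n1 by simp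
  have M0: "M > 0" using M4 by simp
  have T3: "T \<ge> 3" using Tn n1 by simp
  define e where "e = 1/M^2"
  have e0: "e > 0" using M0 by (simp add: e_def)
  have e16: "e \<le> 1/16"
  proof -
    have "M^2 \<ge> 4^2" using M4 by (intro power_mono) auto
    hence "inverse (M^2) \<le> inverse (16::real)" by (intro le_imp_inverse_le) auto
    thus ?thesis unfolding e_def by (simp add: inverse_eq_divide)
  qed
  have Te: "T*e < T/4" using e16 T3 by (simp add: mult_strict_left_mono)
  have s_def': "s = sqrt (T^2 - 4*T*e)" unfolding s_def e_def by (simp add: field_simps)
  have rad: "T^2 - 4*T*e \<ge> 0"
  proof -
    have "4*T*e < T" using Te by simp
    moreover have "T*1 \<le> T*T" using T3 by (intro mult_left_mono) auto
    ultimately show ?thesis by (simp add: power2_eq_square)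
  qed
  have s0: "s \<ge> 0" unfolding s_def' using rad by simp
  have ss: "s^2 = T^2 - 4*T*e" unfolding s_def' using rad by simp
  have s_lt: "s < T - 2*e"
  proof -
    have p: "T - 2*e > 0" using T3 e16 by simp
    have "s^2 < (T - 2*e)^2" unfolding ss using e0 by (simp add: power2_eq_square algebra_simps)
    thus ?thesis using p s0 by (smt (verit) power_mono)
  qed
  have s_gt: "s > T - 4*e"
  proof -
    have p: "T - 4*e > 0" using T3 e16 by simp
    have "T*e > 4*e*e" using T3 e0 e16 by (simp add: mult_strict_right_mono)
    hence "s^2 > (T - 4*e)^2" unfolding ss by (simp add: power2_eq_square algebra_simps)
    thus ?thesis using p s0 by (smt (verit) power_mono)
  qed
  have y1e: "e < y1" "y1 < 2*e" using s_lt s_gt unfolding y1_def by auto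
  have y2e: "y2 = T - y1" unfolding y1_def y2_def by (simp add: field_simps)
  have y12: "y1 < y2" using y1e y2e T3 e16 by simp
  have Q: "y^2 - T*y + T*e = 0" if "y = y1 \<or> y = y2" for y
  proof -
    have "2*y - T = s \<or> 2*y - T = -s" using that unfolding y1_def y2_def by auto
    hence "(2*y - T)^2 = s^2" by auto
    hence "(2*y - T)^2 = T^2 - 4*T*e" using ss by simp
    hence "4*(y^2 - T*y + T*e) = 0" by (simp add: power2_eq_square algebra_simps)
    thus ?thesis by simp
  qed
  have M2e: "M^2 * e = 1" unfolding e_def using M0 by simp
  have den: "1 - M^2*(x-K) \<noteq> 0" if "y1 \<le> x - K" for x
  proof -
    have "M^2*(x-K) > M^2 * e" using that y1e M0 by (simp add: mult_strict_left_mono)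
    thus ?thesis using M2e by simp
  qed
  have fixp: "mob A B C D (K+y) = K+y" if "y = y1 \<or> y = y2" for y
  proof -
    have yy: "y1 \<le> y" using that y12 by auto
    have d: "1 - M^2*y \<noteq> 0" using den[of "K+y"] yy by simp
    have "mob A B C D (K+y) = K + T + y/(1 - M^2*y)"
      unfolding A_def B_def C_def D_def using mobN[OF M0 den[of "K+y"]] yy by simp
    also have "\<dots> = K + y"
    proof -
      have "y^2 - T*y + T*e = 0" by (rule Q[OF that])
      hence "M^2*(y^2 - T*y + T*e) = 0" by simp
      hence "M^2*y^2 - T*M^2*y + T = 0" using M2e by (simp add: algebra_simps)
      hence "(T - y)*(1 - M^2*y) + y = 0" by (simp add: algebra_simps power2_eq_square)
      thus ?thesis using d by (simp add: field_simps)
    qed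
    finally show ?thesis .
  qed
  show "K + y1 < K + y2" using y12 by simp
  show "mob A B C D (K+y1) = K+y1" "mob A B C D (K+y2) = K+y2" using fixp by auto
  show "\<forall>x\<in>{K+y1..K+y2}. C*x + D \<noteq> 0 \<and> - C*x + A \<noteq> 0"
  proof
    fix x assume x: "x \<in> {K+y1..K+y2}"
    have "C*x + D = 1 - M^2*(x-K)" unfolding C_def D_def by (simp add: algebra_simps)
    moreover have "1 - M^2*(x-K) \<noteq> 0" using den x by simp
    moreover have "- C*x + A = M^2*((x-K) - T) + 1" unfolding C_def A_def by (simp add: algebra_simps)
    moreover have "M^2*((x-K) - T) + 1 \<noteq> 0"
    proof -
      have "x - K - T \<le> - y1" using x y2e by simp
      hence "x - K - T < - e" using y1e by simp
      hence "M^2*((x-K) - T) < M^2*(-e)" using M0 by (intro mult_strict_left_mono) auto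
      thus ?thesis using M2e by simp
    qed
    ultimately show "C*x + D \<noteq> 0 \<and> - C*x + A \<noteq> 0" by simp
  qed
  show "p0 < K + y1" using Kp y1e e0 by simp
  have "1/M + 2*e < 1/n"
  proof -
    have nn: "8*n*1 \<le> 8*n*n" using n1 by (intro mult_left_mono) auto
    have "2*e = 1/(8*n*n)" unfolding e_def Mn using n1 by (simp add: power2_eq_square field_simps)
    also have "\<dots> \<le> 1/(8*n*1)" using nn n1 by (intro divide_left_mono) auto
    finally have "2*e \<le> 1/(8*n)" by simp
    moreover have "1/M = 1/(4*n)" using Mn by simp
    moreover have "1/(4*n) + 1/(8*n) < 1/n" using n1 by (simp add: field_simps)
    ultimately show ?thesis by simp
  qed
  thus "K + y1 < p0 + 1/n" using Kp y1e by simp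
  show "n \<le> K + y2" using y2e y1e e16 Kp Tn by simp
  show "\<forall>x. p0 + 1/n \<le> x \<longrightarrow> x < K + y2 \<longrightarrow> n \<le> mob A B C D x"
  proof (intro allI impI)
    fix x assume x: "p0 + 1/n \<le> x" "x < K + y2"
    define y where "y = x - K"
    have "1/n = 4/M" using Mn by simp
    have "1/M \<le> 1/4" using M4 by simp
    have y3: "y \<ge> 3/M" using x Kp \<open>1/n = 4/M\<close> unfolding y_def by simp
    hence My: "M^2*y \<ge> 3*M" using M0 by (simp add: field_simps power2_eq_square)
    have "y1 \<le> y" using y3 y1e \<open>1/n = 4/M\<close> x Kp \<open>K + y1 < p0 + 1/n\<close> unfolding y_def by simp
    hence d: "1 - M^2*y \<noteq> 0" using den[of x] unfolding y_def by simp
    have v: "mob A B C D x = K + T + y/(1 - M^2*y)"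
      unfolding A_def B_def C_def D_def y_def by (rule mobN[OF M0 d[unfolded y_def]])
    have M16: "M^2 \<ge> 16"
    proof -
      have "M^2 \<ge> 4^2" using M4 by (intro power_mono) auto
      thus ?thesis by simp
    qed
    have y0: "y \<ge> 0" using y3 M0 by (smt (verit) divide_pos_pos)
    have M12: "M^2*y \<ge> 12" using My M4 by simp
    have "16*y \<le> M^2*y" using M16 y0 by (intro mult_right_mono) auto
    hence yM: "y \<le> M^2*y - 1" using M12 by simp
    have pos: "M^2*y - 1 > 0" using M12 by simp
    have "y/(M^2*y - 1) \<le> 1" using yM pos by simp
    moreover have "y/(1 - M^2*y) = - (y/(M^2*y - 1))"
      by (metis minus_diff_eq minus_divide_right)
    ultimately have "y/(1 - M^2*y) \<ge> -1" by simp
    thus "n \<le> mob A B C D x" unfolding v using Kp Tn by simp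
  qed
qed



lemma bump_right:
  fixes p0 :: real and n :: nat
  assumes n1: "n \<ge> 1"
  shows "\<exists>a b c d (r1::real) (r2::real). gb a b c d r1 r2 \<and> p0 < r1 \<and> r1 < p0 + 1/real n \<and> real n \<le> r2 \<and>
           (\<forall>x. p0 + 1/real n \<le> x \<longrightarrow> x < r2 \<longrightarrow> real n \<le> imob a b c d x)"
proof -
  define m :: int where "m = 4 * int n"
  define k :: int where "k = \<lfloor>p0 * of_int m\<rfloor> + 1"
  define t :: int where "t = int n + 2 + \<lceil>\<bar>p0\<bar>\<rceil>"
  define M :: real where "M = of_int m"
  define K :: real where "K = of_int k / M"
  define T :: real where "T = of_int t"
  have Mn: "M = 4 * real n" unfolding M_def m_def by simp
  have M0: "M > 0" using Mn n1 by simp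
  have kM: "of_int k = K * M" unfolding K_def using M0 by simp
  have Kp: "p0 < K"
  proof -
    have "p0 * M < of_int k" unfolding k_def M_def by linarith
    thus ?thesis unfolding K_def using M0 by (simp add: field_simps)
  qed
  have Kp2: "K \<le> p0 + 1/M"
  proof -
    have "of_int k \<le> p0 * M + 1" unfolding k_def M_def by linarith
    thus ?thesis unfolding K_def using M0 by (simp add: field_simps)
  qed
  have Tn: "T \<ge> real n + 2 + \<bar>p0\<bar>" unfolding T_def t_def using le_of_int_ceiling[of "\<bar>p0\<bar>"] by simp
  define s where "s \<equiv> sqrt (T^2 - 4*T/M^2)"
  define y1 where "y1 \<equiv> (T - s)/2"
  define y2 where "y2 \<equiv> (T + s)/2"
  define a where "a = 1 - k*m - t*m^2"
  define b where "b = k^2 + t*(k*m+1)"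
  define c where "c = -(m^2)"
  define d where "d = k*m+1"
  have mM: "real_of_int m = M" by (simp add: M_def)
  have ea: "real_of_int a = 1 - K*M^2 - T*M^2" unfolding a_def
    by (simp add: kM mM T_def power2_eq_square algebra_simps)
  have eb: "real_of_int b = K^2*M^2 + T*(K*M^2+1)" unfolding b_def
    by (simp add: kM mM T_def power2_eq_square algebra_simps)
  have ec: "real_of_int c = -(M^2)" unfolding c_def M_def by simp
  have ed: "real_of_int d = K*M^2+1" unfolding d_def
    by (simp add: kM mM power2_eq_square algebra_simps)
  have n1r: "real n \<ge> 1" using n1 by simp
  note BR = bump_real[OF Mn n1r Kp Kp2 Tn, folded s_def y1_def y2_def, folded ea eb ec ed]
  have det: "a*d - b*c = 1" unfolding a_def b_def c_def d_def by (simp add: power2_eq_square algebra_simps)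
  have tr: "\<bar>a+d\<bar> > 2"
  proof -
    have "\<lceil>\<bar>p0\<bar>\<rceil> \<ge> 0" by simp
    hence t3: "t \<ge> 3" unfolding t_def using n1 by linarith
    have m4: "m \<ge> 4" unfolding m_def using n1 by simp
    have "m^2 \<ge> 4^2" using m4 by (intro power_mono) auto
    hence "m^2 \<ge> 16" by simp
    hence "t*m^2 \<ge> 3*16" using t3 by (intro mult_mono) auto
    moreover have "a + d = 2 - t*m^2" unfolding a_def d_def by simp
    ultimately show ?thesis by simp
  qed
  have "gb a b c d (K+y1) (K+y2)" unfolding gb_def using det tr BR(1-4) by auto
  thus ?thesis using BR(5-8) by blast
qed

lemma gb_mirror: assumes "gb a b c d u1 u2" shows "gb a (-b) (-c) d (-u2) (-u1)"
proof -
  have m: "imob a (-b) (-c) d x = - imob a b c d (-x)" for x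
    unfolding mob_def by (simp add: minus_divide_left algebra_simps)
  have g: "a*d - b*c = 1" "\<bar>a+d\<bar> > 2" "u1 < u2" "imob a b c d u1 = u1" "imob a b c d u2 = u2"
    "\<forall>x\<in>{u1..u2}. of_int c*x + of_int d \<noteq> 0 \<and> - (of_int c)*x + of_int a \<noteq> 0"
    using assms unfolding gb_def by auto
  have "\<forall>x\<in>{-u2..-u1}. of_int (-c)*x + of_int d \<noteq> 0 \<and> - (of_int (-c))*x + of_int a \<noteq> 0"
  proof
    fix x assume "x \<in> {-u2..-u1}"
    hence "-x \<in> {u1..u2}" by auto
    hence "of_int c*(-x) + of_int d \<noteq> 0 \<and> - (of_int c)*(-x) + of_int a \<noteq> 0" using g(6) by blast
    thus "of_int (-c)*x + of_int d \<noteq> 0 \<and> - (of_int (-c))*x + of_int a \<noteq> 0" by simp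
  qed
  moreover have "imob a (-b) (-c) d (-u1) = -u1" "imob a (-b) (-c) d (-u2) = -u2" using m g(4,5) by auto
  ultimately show ?thesis using g(1,2,3) unfolding gb_def by auto
qed



lemma imob_mirror: "imob a (-b) (-c) d x = - imob a b c d (-x)"
  unfolding mob_def by (simp add: minus_divide_left algebra_simps)

lemma exists_g:
  fixes p0 :: real and n :: nat
  assumes n1: "n \<ge> 1"
  shows "\<exists>g\<in>H_Z. \<forall>x. \<bar>x - p0\<bar> \<ge> 1/real n \<longrightarrow> (\<exists>y. g (phi x) = phi y \<and> real n \<le> \<bar>y\<bar>)"
proof -
  obtain aR bR cR dR r1 r2 where R: "gb aR bR cR dR r1 r2" and Rp: "p0 < r1" "r1 < p0 + 1/real n" "real n \<le> r2"
    and Rpush: "\<forall>x. p0 + 1/real n \<le> x \<longrightarrow> x < r2 \<longrightarrow> real n \<le> imob aR bR cR dR x"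
    using bump_right[OF n1, of p0] by blast
  obtain a b c d s1 s2 where S: "gb a b c d s1 s2" and Sp: "-p0 < s1" "s1 < -p0 + 1/real n" "real n \<le> s2"
    and Spush: "\<forall>x. -p0 + 1/real n \<le> x \<longrightarrow> x < s2 \<longrightarrow> real n \<le> imob a b c d x"
    using bump_right[OF n1, of "-p0"] by blast
  have L: "gb a (-b) (-c) d (-s2) (-s1)" by (rule gb_mirror[OF S])
  have ord: "-s1 < r1" using Rp Sp by simp
  have r12: "r1 < r2" and s12: "s1 < s2" using gb_u12 R S by auto
  let ?g = "glue (ipact aR bR cR dR) (ipact a (-b) (-c) d) (-s2) (-s1) r1 r2"
  have gH: "?g \<in> H_Z" by (rule glue_HZ[OF R L ord])
  have pr: "\<exists>y. ?g (phi x) = phi y \<and> real n \<le> \<bar>y\<bar>" if x: "\<bar>x - p0\<bar> \<ge> 1/real n" for x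
  proof (cases "x \<ge> p0")
    case True
    hence xr: "p0 + 1/real n \<le> x" using x by simp
    show ?thesis
    proof (cases "x < r2")
      case True
      have "?g (phi x) = ipact aR bR cR dR (phi x)" unfolding glue_def using True xr Rp by (auto simp: phi_mem_iff)
      also have "\<dots> = phi (imob aR bR cR dR x)" using gb_pact_phi[OF R, of x] True xr Rp by simp
      finally show ?thesis using Rpush xr True by force
    next
      case False
      have "?g (phi x) = phi x" unfolding glue_def using False xr Rp Sp by (auto simp: phi_mem_iff)
      thus ?thesis using False Rp by force
    qed
  next
    case False
    hence xl: "x \<le> p0 - 1/real n" using x by simp
    have nR: "phi x \<notin> phi ` {r1<..<r2}" using xl Rp by (auto simp: phi_mem_iff)
    show ?thesis
    proof (cases "-s2 < x")
      case True
      have xin: "x \<in> {-s2<..<-s1}" using True xl Sp by simp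
      have "?g (phi x) = ipact a (-b) (-c) d (phi x)" unfolding glue_def using nR xin by (auto simp: phi_mem_iff)
      also have "\<dots> = phi (imob a (-b) (-c) d x)" using gb_pact_phi[OF L, of x] xin by simp
      finally have e: "?g (phi x) = phi (- imob a b c d (-x))" unfolding imob_mirror .
      have "real n \<le> imob a b c d (-x)" using Spush xl True by simp
      thus ?thesis using e by force
    next
      case False
      have "?g (phi x) = phi x" unfolding glue_def using nR False by (auto simp: phi_mem_iff)
      thus ?thesis using False Sp by force
    qed
  qed
  show ?thesis using gH pr by blast
qed

lemma phi_near1:
  assumes "\<bar>y\<bar> \<ge> 1"
  shows "cmod (phi y - 1) \<le> 4/\<bar>y\<bar>"
proof -
  have p: "y^2+1 > 0" using zero_le_power2[of y] by linarith
  have re: "Re (phi y - 1) = -2/(y^2+1)" using p by (simp add: Re_phi field_simps)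
  have im: "Im (phi y - 1) = 2*y/(y^2+1)" by (simp add: Im_phi)
  have "cmod (phi y - 1) \<le> \<bar>Re (phi y - 1)\<bar> + \<bar>Im (phi y - 1)\<bar>" by (rule cmod_le)
  also have "\<dots> = (2 + 2*\<bar>y\<bar>)/(y^2+1)"
  proof -
    have "\<bar>Re (phi y - 1)\<bar> = 2/(y^2+1)" unfolding re using p by (simp add: abs_divide)
    moreover have "\<bar>Im (phi y - 1)\<bar> = 2*\<bar>y\<bar>/(y^2+1)" unfolding im using p by (simp add: abs_divide abs_mult)
    ultimately show ?thesis by (simp add: add_divide_distrib)
  qed
  also have "\<dots> \<le> 4/\<bar>y\<bar>"
  proof -
    have a: "\<bar>y\<bar>*1 \<le> \<bar>y\<bar>*\<bar>y\<bar>" using assms by (intro mult_left_mono) auto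
    have "\<bar>y\<bar>*\<bar>y\<bar> = y^2" by (simp add: power2_eq_square abs_mult_self_eq)
    hence "(2 + 2*\<bar>y\<bar>)*\<bar>y\<bar> \<le> 4*(y^2+1)" using a by (simp add: algebra_simps)
    thus ?thesis using p assms by (simp add: field_simps)
  qed
  finally show ?thesis .
qed


theorem lemma2:
  assumes "p \<in> P1" and "p \<noteq> pinf"
  shows "\<exists>g :: nat \<Rightarrow> complex \<Rightarrow> complex. (\<forall>n. g n \<in> H_Z) \<and>
           (\<forall>K. compact K \<and> K \<subseteq> P1 - {p} \<longrightarrow>
                uniform_limit K g (\<lambda>q. pinf) sequentially)"
proof -
  obtain p0 where p0: "p = phi p0" using assms P1_cases pinf_1 by metis
  have "\<forall>n. \<exists>g\<in>H_Z. \<forall>x. \<bar>x - p0\<bar> \<ge> 1/real (Suc n) \<longrightarrow> (\<exists>y. g (phi x) = phi y \<and> real (Suc n) \<le> \<bar>y\<bar>)"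
  proof
    fix n show "\<exists>g\<in>H_Z. \<forall>x. \<bar>x - p0\<bar> \<ge> 1/real (Suc n) \<longrightarrow> (\<exists>y. g (phi x) = phi y \<and> real (Suc n) \<le> \<bar>y\<bar>)"
      by (rule exists_g) simp
  qed
  then obtain G where GH: "\<And>n. G n \<in> H_Z"
    and Gp: "\<And>n x. \<bar>x - p0\<bar> \<ge> 1/real (Suc n) \<Longrightarrow> (\<exists>y. G n (phi x) = phi y \<and> real (Suc n) \<le> \<bar>y\<bar>)"
    by metis
  have G1: "G n 1 = 1" for n using GH[of n] unfolding H_Z_def pinf_1 by simp
  have "uniform_limit K G (\<lambda>q. pinf) sequentially" if K: "compact K" "K \<subseteq> P1 - {p}" for K
  proof (unfold uniform_limit_iff, intro allI impI)
    fix e :: real assume e: "e > 0"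
    obtain \<delta> where d: "\<delta> > 0" "\<forall>q\<in>K. \<delta> \<le> dist p q"
      using separate_point_closed[OF compact_imp_closed[OF K(1)], of p] K(2) by blast
    have "continuous (at p0) phi" using cont_phi[of UNIV] continuous_on_eq_continuous_at by blast
    then obtain \<eta> where eta: "\<eta> > 0" "\<forall>x. dist x p0 < \<eta> \<longrightarrow> dist (phi x) (phi p0) < \<delta>"
      unfolding continuous_at_eps_delta using d(1) by blast
    obtain N1 :: nat where N1: "1/\<eta> < N1" using reals_Archimedean2 by blast
    obtain N2 :: nat where N2: "4/e < N2" using reals_Archimedean2 by blast
    show "\<forall>\<^sub>F n in sequentially. \<forall>q\<in>K. dist (G n q) pinf < e"
      unfolding eventually_sequentially
    proof (intro exI[of _ "max N1 N2"] allI impI ballI)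
      fix n q assume n: "max N1 N2 \<le> n" and q: "q \<in> K"
      have sn: "real (Suc n) > 1/\<eta>" "real (Suc n) > 4/e" using n N1 N2 by linarith+
      have qP: "q \<in> P1" "q \<noteq> p" using q K(2) by auto
      show "dist (G n q) pinf < e"
      proof (cases "q = 1")
        case True then show ?thesis using G1 e pinf_1 by simp
      next
        case False
        then obtain x where x: "q = phi x" using qP P1_cases by metis
        have "\<not> dist x p0 < \<eta>" using eta(2) d(2) q x p0 by (metis dist_commute not_less)
        hence "\<bar>x - p0\<bar> \<ge> \<eta>" by (simp add: dist_real_def)
        moreover have "1/real (Suc n) < \<eta>" using sn(1) eta(1)
          by (metis divide_less_eq mult.commute of_nat_0_less_iff zero_less_Suc)
        ultimately obtain y where y: "G n (phi x) = phi y" "real (Suc n) \<le> \<bar>y\<bar>" using Gp[of n x] by force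
        have y1: "\<bar>y\<bar> \<ge> 1" using y(2) by simp
        have "dist (G n q) pinf = cmod (phi y - 1)" using x y pinf_1 by (simp add: dist_norm)
        also have "\<dots> \<le> 4/\<bar>y\<bar>" by (rule phi_near1[OF y1])
        also have "\<dots> \<le> 4/real (Suc n)" using y(2) by (intro divide_left_mono) auto
        also have "\<dots> < e" using sn(2) e by (simp add: divide_less_eq mult.commute)
        finally show ?thesis .
      qed
    qed
  qed
  thus ?thesis using GH by blast
qed


end
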